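(* Let $\mathcal{D}$ be an algebra of bounded real functions with the Stone property containing a strictly positive function $\chi>0$, and let $(L,\mathcal{D})$ be a Lagrangian. (i) If there exists a finite energy dominant measure $m$ for $(L,\mathcal{D})$, then every $\Gamma(f)$, $f\in\mathcal{D}$, is countably additive on $\alpha(\mathcal{S})$. (ii) If $(L,\mathcal{D})$ is energy separable with respect to $\{f_n\}_n\subset\mathcal{D}$ and every $\Gamma(f_n)$ is countably additive on $\alpha(\mathcal{S})$, then $\nu(A):=\sum_{n=1}^\infty2^{-n}\frac{\Gamma(f_n)(A)}{1+\Gamma(f_n)(X)}$, $A\in\alpha(\mathcal{S})$, is a finite energy dominant measure for $(L,\mathcal{D})$.
   Context: Lagrangian: symmetric bilinear map $(f,g)\mapsto L_{f,g}$ into the dual of $(\mathcal{D},\|\cdot\|_{\sup})$, each $L_f:=L_{f,f}$ positive, $L_f-L_{T_1(f)}$ positive, $T_1(x)=\max(x,0)\wedge1$. $\mathcal{S}=\{\{g>0\}:g\in\mathcal{D}\}$, $\alpha(\mathcal{S})$ the generated algebra. $\Gamma(f)(B):=\sup\{L_f(h):h\in\mathcal{D},0\le h\le\mathbf 1_B\}$ for $B\in\mathcal{S}$, $\Gamma(f)(A):=\inf\{\Gamma(f)(B):A\subset B\in\mathcal{S}\}$; on $\alpha(\mathcal{S})$ it is a finite finitely additive measure. A measure is a countably additive set function. For finitely additive $\mu,\nu$ on $\alpha(\mathcal{S})$, $\nu\ll\mu$ means: for each $\varepsilon>0$ there is $\delta>0$ with $\nu(A)<\varepsilon$ whenever $\mu(A)<\delta$.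 A measure $m$ on $\alpha(\mathcal{S})$ is energy dominant if $\Gamma(f)\ll m$ for all $f\in\mathcal{D}$. $(L,\mathcal{D})$ is energy separable if there is a countable $\{f_n\}\subset\mathcal{D}$ with $\Gamma(f)\ll\nu$ for all $f$, $\nu$ as in the claim. *)

theory Defs
  imports "HOL-Analysis.Analysis"
begin

text \<open>Underlying space: the whole type 'a (playing the role of X).\<close>

definition T1 :: "('a \<Rightarrow> real) \<Rightarrow> 'a \<Rightarrow> real" where
  "T1 f = (\<lambda>x. min (max (f x) 0) 1)"

definition stone_algebra :: "('a \<Rightarrow> real) set \<Rightarrow> bool" where
  "stone_algebra D \<longleftrightarrow>
     (\<forall>f\<in>D. bounded (range f)) \<and>
     (\<forall>f\<in>D. \<forall>g\<in>D. (\<lambda>x. f x + g x) \<in> D) \<and>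
     (\<forall>f\<in>D. \<forall>c::real. (\<lambda>x. c * f x) \<in> D) \<and>
     (\<forall>f\<in>D. \<forall>g\<in>D. (\<lambda>x. f x * g x) \<in> D) \<and>
     (\<forall>f\<in>D. \<forall>g\<in>D. (\<lambda>x. max (f x) (g x)) \<in> D \<and> (\<lambda>x. min (f x) (g x)) \<in> D) \<and>
     (\<forall>f\<in>D. (\<lambda>x. min (f x) 1) \<in> D)"

definition sup_norm :: "('a \<Rightarrow> real) \<Rightarrow> real" where
  "sup_norm h = (SUP x. \<bar>h x\<bar>)"

definition lagrangian :: "('a \<Rightarrow> real) set \<Rightarrow>
    (('a \<Rightarrow> real) \<Rightarrow> ('a \<Rightarrow> real) \<Rightarrow> ('a \<Rightarrow> real) \<Rightarrow> real) \<Rightarrow> bool" where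
  "lagrangian D L \<longleftrightarrow>
     (\<forall>f\<in>D. \<forall>g\<in>D. \<forall>h\<in>D. L f g h = L g f h) \<and>
     (\<forall>f1\<in>D. \<forall>f2\<in>D. \<forall>g\<in>D. \<forall>h\<in>D. \<forall>a b::real.
        L (\<lambda>x. a * f1 x + b * f2 x) g h = a * L f1 g h + b * L f2 g h) \<and>
     (\<forall>f\<in>D. \<forall>g\<in>D. \<forall>h1\<in>D. \<forall>h2\<in>D. \<forall>a b::real.
        L f g (\<lambda>x. a * h1 x + b * h2 x) = a * L f g h1 + b * L f g h2) \<and>
     (\<forall>f\<in>D. \<forall>g\<in>D. \<exists>C::real. \<forall>h\<in>D. \<bar>L f g h\<bar> \<le> C * sup_norm h) \<and>
     (\<forall>f\<in>D. \<forall>h\<in>D. (\<forall>x. 0 \<le> h x) \<longrightarrow> 0 \<le> L f f h) \<and>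
     (\<forall>f\<in>D. \<forall>h\<in>D. (\<forall>x. 0 \<le> h x) \<longrightarrow> L (T1 f) (T1 f) h \<le> L f f h)"

definition S_sets :: "('a \<Rightarrow> real) set \<Rightarrow> 'a set set" where
  "S_sets D = {{x. 0 < g x} | g. g \<in> D}"

definition gen_alg :: "('a \<Rightarrow> real) set \<Rightarrow> 'a set set" where
  "gen_alg D = \<Inter>{M. algebra UNIV M \<and> S_sets D \<subseteq> M}"

definition GammaS :: "('a \<Rightarrow> real) set \<Rightarrow>
    (('a \<Rightarrow> real) \<Rightarrow> ('a \<Rightarrow> real) \<Rightarrow> ('a \<Rightarrow> real) \<Rightarrow> real) \<Rightarrow> ('a \<Rightarrow> real) \<Rightarrow> 'a set \<Rightarrow> real" where
  "GammaS D L f B = Sup {L f f h | h. h \<in> D \<and> (\<forall>x. 0 \<le> h x \<and> h x \<le> indicator B x)}"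

definition Gamma :: "('a \<Rightarrow> real) set \<Rightarrow>
    (('a \<Rightarrow> real) \<Rightarrow> ('a \<Rightarrow> real) \<Rightarrow> ('a \<Rightarrow> real) \<Rightarrow> real) \<Rightarrow> ('a \<Rightarrow> real) \<Rightarrow> 'a set \<Rightarrow> real" where
  "Gamma D L f A = Inf {GammaS D L f B | B. B \<in> S_sets D \<and> A \<subseteq> B}"

definition countably_additive_real :: "'a set set \<Rightarrow> ('a set \<Rightarrow> real) \<Rightarrow> bool" where
  "countably_additive_real M \<mu> \<longleftrightarrow>
     (\<forall>A :: nat \<Rightarrow> 'a set. range A \<subseteq> M \<longrightarrow> disjoint_family A \<longrightarrow> (\<Union>(range A)) \<in> M \<longrightarrow>
        (\<lambda>n. \<mu> (A n)) sums \<mu> (\<Union>(range A)))"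

text \<open>A finite measure on M: nonnegative, real-valued (hence finite), countably additive.\<close>
definition finite_measure_on :: "'a set set \<Rightarrow> ('a set \<Rightarrow> real) \<Rightarrow> bool" where
  "finite_measure_on M m \<longleftrightarrow> (\<forall>A\<in>M. 0 \<le> m A) \<and> countably_additive_real M m"

definition abs_cont :: "'a set set \<Rightarrow> ('a set \<Rightarrow> real) \<Rightarrow> ('a set \<Rightarrow> real) \<Rightarrow> bool" where
  "abs_cont M \<nu> \<mu> \<longleftrightarrow>
     (\<forall>\<epsilon>>0. \<exists>\<delta>>0. \<forall>A\<in>M. \<mu> A < \<delta> \<longrightarrow> \<nu> A < \<epsilon>)"

definition energy_dominant :: "('a \<Rightarrow> real) set \<Rightarrow>
    (('a \<Rightarrow> real) \<Rightarrow> ('a \<Rightarrow> real) \<Rightarrow> ('a \<Rightarrow> real) \<Rightarrow> real) \<Rightarrow> ('a set \<Rightarrow> real) \<Rightarrow> bool" where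
  "energy_dominant D L m \<longleftrightarrow>
     finite_measure_on (gen_alg D) m \<and> (\<forall>f\<in>D. abs_cont (gen_alg D) (Gamma D L f) m)"

text \<open>nu(A) = sum_{n>=1} 2^{-n} Gamma(f_n)(A) / (1 + Gamma(f_n)(X)); the sequence is indexed from 0
  here, so term n carries weight 2^{-(n+1)}.\<close>
definition nu_of :: "('a \<Rightarrow> real) set \<Rightarrow>
    (('a \<Rightarrow> real) \<Rightarrow> ('a \<Rightarrow> real) \<Rightarrow> ('a \<Rightarrow> real) \<Rightarrow> real) \<Rightarrow> (nat \<Rightarrow> 'a \<Rightarrow> real) \<Rightarrow> 'a set \<Rightarrow> real" where
  "nu_of D L fs A = (\<Sum>n. (1/2) ^ (Suc n) * (Gamma D L (fs n) A / (1 + Gamma D L (fs n) UNIV)))"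

definition energy_separable_wrt :: "('a \<Rightarrow> real) set \<Rightarrow>
    (('a \<Rightarrow> real) \<Rightarrow> ('a \<Rightarrow> real) \<Rightarrow> ('a \<Rightarrow> real) \<Rightarrow> real) \<Rightarrow> (nat \<Rightarrow> 'a \<Rightarrow> real) \<Rightarrow> bool" where
  "energy_separable_wrt D L fs \<longleftrightarrow>
     range fs \<subseteq> D \<and> (\<forall>f\<in>D. abs_cont (gen_alg D) (Gamma D L f) (nu_of D L fs))"

end

theory Submission imports Defs begin

lemma meas_cont:
  assumes M: "algebra UNIV M" and fm: "finite_measure_on M m" and R: "range R \<subseteq> M"
    and dec: "\<And>n. R (Suc n) \<subseteq> R n" and empty: "(\<Inter>n. R n) = {}"
  shows "(\<lambda>n. m (R n)) \<longlonglongrightarrow> 0"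
proof -
  interpret algebra UNIV M by (rule M)
  define A where "A n = R n - R (Suc n)" for n
  have AM: "A n \<in> M" for n unfolding A_def using R by auto
  have disj: "disjoint_family (\<lambda>n. A (n + k))" for k
  proof -
    have key: "A (a + k) \<inter> A (b + k) = {}" if "a < b" for a b
    proof -
      have "R (b + k) \<subseteq> R (Suc (a + k))"
        by (rule lift_Suc_antimono_le[of R, OF dec]) (use that in simp)
      then show ?thesis unfolding A_def by auto
    qed
    show ?thesis unfolding disjoint_family_on_def
      by (metis inf_commute key linorder_neqE_nat)
  qed
  have un: "(\<Union>n. A (n + k)) = R k" for k
  proof
    show "(\<Union>n. A (n + k)) \<subseteq> R k"
    proof
      fix x assume "x \<in> (\<Union>n. A (n + k))"
      then obtain n where "x \<in> R (n + k)" unfolding A_def by auto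
      moreover have "R (n + k) \<subseteq> R k" by (rule lift_Suc_antimono_le[of R, OF dec]) simp
      ultimately show "x \<in> R k" by auto
    qed
    show "R k \<subseteq> (\<Union>n. A (n + k))"
    proof
      fix x assume xk: "x \<in> R k"
      show "x \<in> (\<Union>n. A (n + k))"
      proof (rule ccontr)
        assume nx: "x \<notin> (\<Union>n. A (n + k))"
        have all: "x \<in> R (n + k)" for n
        proof (induction n)
          case 0 then show ?case using xk by simp
        next
          case (Suc n) then show ?case using nx unfolding A_def by auto
        qed
        have "x \<in> R j" for j
        proof (cases "j \<le> k")
          case True
          then have "R k \<subseteq> R j" by (rule lift_Suc_antimono_le[of R, OF dec])
          then show ?thesis using xk by auto
        next
          case False
          then show ?thesis using all[of "j - k"] by simp
        qed
        then show False using empty by auto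
      qed
    qed
  qed
  have sums: "(\<lambda>n. m (A (n + k))) sums m (R k)" for k
  proof -
    have "range (\<lambda>n. A (n + k)) \<subseteq> M" using AM by auto
    moreover have "(\<Union>(range (\<lambda>n. A (n + k)))) \<in> M" using un[of k] R by auto
    ultimately have "(\<lambda>n. m (A (n + k))) sums m (\<Union>(range (\<lambda>n. A (n + k))))"
      using fm disj[of k] unfolding finite_measure_on_def countably_additive_real_def by blast
    then show ?thesis using un[of k] by simp
  qed
  have summ: "summable (\<lambda>n. m (A n))" using sums[of 0] by (simp add: sums_summable)
  have eq: "m (R k) = (\<Sum>n. m (A n)) - (\<Sum>i<k. m (A i))" for k
    using sums_unique[OF sums[of k]] suminf_minus_initial_segment[OF summ, of k] by simp
  have "(\<lambda>k. (\<Sum>n. m (A n)) - (\<Sum>i<k. m (A i))) \<longlonglongrightarrow> (\<Sum>n. m (A n)) - (\<Sum>n. m (A n))"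
    by (intro tendsto_diff tendsto_const summable_LIMSEQ[OF summ])
  then show ?thesis using eq by simp
qed

locale lag =
  fixes D :: "('a \<Rightarrow> real) set"
    and L :: "('a \<Rightarrow> real) \<Rightarrow> ('a \<Rightarrow> real) \<Rightarrow> ('a \<Rightarrow> real) \<Rightarrow> real"
    and chi :: "'a \<Rightarrow> real"
  assumes st: "stone_algebra D" and chiD: "chi \<in> D" and chipos: "\<forall>x. 0 < chi x"
    and lg: "lagrangian D L"
begin

lemma D_add: "h1 \<in> D \<Longrightarrow> h2 \<in> D \<Longrightarrow> (\<lambda>x. h1 x + h2 x) \<in> D"
  using st unfolding stone_algebra_def by blast
lemma D_scale: "h \<in> D \<Longrightarrow> (\<lambda>x. c * h x) \<in> D"
  using st unfolding stone_algebra_def by blast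
lemma D_max: "h1 \<in> D \<Longrightarrow> h2 \<in> D \<Longrightarrow> (\<lambda>x. max (h1 x) (h2 x)) \<in> D"
  using st unfolding stone_algebra_def by blast
lemma D_min: "h1 \<in> D \<Longrightarrow> h2 \<in> D \<Longrightarrow> (\<lambda>x. min (h1 x) (h2 x)) \<in> D"
  using st unfolding stone_algebra_def by blast
lemma D_min1: "h \<in> D \<Longrightarrow> (\<lambda>x. min (h x) 1) \<in> D"
  using st unfolding stone_algebra_def by blast
lemma D_bdd: "h \<in> D \<Longrightarrow> \<exists>M. \<forall>x. \<bar>h x\<bar> \<le> M"
proof -
  assume "h \<in> D"
  then have "bounded (range h)" using st unfolding stone_algebra_def by blast
  then obtain M where "\<forall>y\<in>range h. norm y \<le> M" by (auto simp: bounded_iff)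
  then show ?thesis by auto
qed
lemma D_zero: "(\<lambda>x. 0) \<in> D"
  using D_scale[OF chiD, of 0] by simp
lemma D_lin: "h1 \<in> D \<Longrightarrow> h2 \<in> D \<Longrightarrow> (\<lambda>x. a * h1 x + b * h2 x) \<in> D"
  by (intro D_add D_scale)
lemma D_diff: "h1 \<in> D \<Longrightarrow> h2 \<in> D \<Longrightarrow> (\<lambda>x. h1 x - h2 x) \<in> D"
  using D_lin[of h1 h2 1 "-1"] by simp
lemma D_pos: "h \<in> D \<Longrightarrow> (\<lambda>x. max (h x) 0) \<in> D"
  using D_max[OF _ D_zero] by simp
lemma D_mincst: assumes "h \<in> D" "0 < t" shows "(\<lambda>x. min (h x) t) \<in> D"
proof -
  have "(\<lambda>x. (1/t) * h x) \<in> D" using D_scale assms by blast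
  then have "(\<lambda>x. t * min ((1/t) * h x) 1) \<in> D" using D_scale D_min1 by blast
  moreover have "(\<lambda>x. t * min ((1/t) * h x) 1) = (\<lambda>x. min (h x) t)"
  proof
    fix x
    have "t * min ((1/t) * h x) 1 = min (t * ((1/t) * h x)) (t * 1)"
      using assms(2) by (simp add: min_mult_distrib_left)
    also have "\<dots> = min (h x) t" using assms(2) by simp
    finally show "t * min ((1/t) * h x) 1 = min (h x) t" .
  qed
  ultimately show ?thesis by simp
qed

lemma S_D: "g \<in> D \<Longrightarrow> {x. 0 < g x} \<in> S_sets D"
  unfolding S_sets_def by blast
lemma S_UNIV: "UNIV \<in> S_sets D"
  using S_D[OF chiD] chipos by simp
lemma S_empty: "{} \<in> S_sets D"
  using S_D[OF D_zero] by simp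
lemma S_Int: "A \<in> S_sets D \<Longrightarrow> B \<in> S_sets D \<Longrightarrow> A \<inter> B \<in> S_sets D"
proof -
  assume "A \<in> S_sets D" "B \<in> S_sets D"
  then obtain g g' where g: "g \<in> D" "A = {x. 0 < g x}" and g': "g' \<in> D" "B = {x. 0 < g' x}"
    unfolding S_sets_def by blast
  have "A \<inter> B = {x. 0 < min (g x) (g' x)}" using g g' by auto
  then show ?thesis using S_D[OF D_min[OF g(1) g'(1)]] by simp
qed
lemma S_cases: "A \<in> S_sets D \<Longrightarrow> \<exists>g\<in>D. (\<forall>x. 0 \<le> g x) \<and> A = {x. 0 < g x}"
proof -
  assume "A \<in> S_sets D"
  then obtain g where g: "g \<in> D" "A = {x. 0 < g x}" unfolding S_sets_def by blast
  show ?thesis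
    by (rule bexI[of _ "\<lambda>x. max (g x) 0"]) (use g D_pos in auto)
qed

lemma gen_alg_algebra: "algebra UNIV (gen_alg D)"
  unfolding algebra_iff_Un gen_alg_def by auto
lemma S_gen: "S_sets D \<subseteq> gen_alg D"
  unfolding gen_alg_def by auto
lemma gen_alg_min: "algebra UNIV M \<Longrightarrow> S_sets D \<subseteq> M \<Longrightarrow> gen_alg D \<subseteq> M"
  unfolding gen_alg_def by auto


lemma L_lin: "f \<in> D \<Longrightarrow> h1 \<in> D \<Longrightarrow> h2 \<in> D \<Longrightarrow>
   L f f (\<lambda>x. a * h1 x + b * h2 x) = a * L f f h1 + b * L f f h2"
  using lg unfolding lagrangian_def by blast
lemma L_pos: "f \<in> D \<Longrightarrow> h \<in> D \<Longrightarrow> (\<forall>x. 0 \<le> h x) \<Longrightarrow> 0 \<le> L f f h"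
  using lg unfolding lagrangian_def by blast
lemma L_add: "f \<in> D \<Longrightarrow> h1 \<in> D \<Longrightarrow> h2 \<in> D \<Longrightarrow>
   L f f (\<lambda>x. h1 x + h2 x) = L f f h1 + L f f h2"
  using L_lin[of f h1 h2 1 1] by simp
lemma L_diff: "f \<in> D \<Longrightarrow> h1 \<in> D \<Longrightarrow> h2 \<in> D \<Longrightarrow>
   L f f (\<lambda>x. h1 x - h2 x) = L f f h1 - L f f h2"
  using L_lin[of f h1 h2 1 "-1"] by simp
lemma L_mono: assumes "f \<in> D" "h1 \<in> D" "h2 \<in> D" "\<forall>x. h1 x \<le> h2 x"
  shows "L f f h1 \<le> L f f h2"
  using L_pos[OF assms(1) D_diff[OF assms(3,2)]] L_diff[OF assms(1,3,2)] assms(4) by simp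
lemma L_zero: assumes "f \<in> D" "\<forall>x. h x = 0" shows "L f f h = 0"
proof -
  have h: "h = (\<lambda>x. 0 * chi x + 0 * chi x)" using assms(2) by auto
  show ?thesis unfolding h using L_lin[OF assms(1) chiD chiD, of 0 0] by simp
qed
lemma L_bound: assumes "f \<in> D"
  shows "\<exists>K\<ge>0. \<forall>h\<in>D. \<forall>t. (\<forall>x. \<bar>h x\<bar> \<le> t) \<longrightarrow> L f f h \<le> K * t"
proof -
  have "\<forall>f\<in>D. \<forall>g\<in>D. \<exists>C. \<forall>h\<in>D. \<bar>L f g h\<bar> \<le> C * sup_norm h"
    using lg unfolding lagrangian_def by blast
  then obtain C where C: "\<forall>h\<in>D. \<bar>L f f h\<bar> \<le> C * sup_norm h"
    using assms by blast
  show ?thesis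
  proof (intro exI[of _ "max C 0"] conjI ballI allI impI)
    fix h t assume h: "h \<in> D" and ht: "\<forall>x. \<bar>h x\<bar> \<le> t"
    have bdd: "bdd_above (range (\<lambda>x. \<bar>h x\<bar>))" using ht by (auto intro: bdd_aboveI2)
    have s0: "0 \<le> sup_norm h" unfolding sup_norm_def
      using cSUP_upper[OF UNIV_I bdd, of undefined] by (meson abs_ge_zero order_trans)
    have st: "sup_norm h \<le> t" unfolding sup_norm_def
      using ht by (intro cSUP_least) auto
    have "L f f h \<le> C * sup_norm h" using C h by force
    also have "\<dots> \<le> max C 0 * sup_norm h" using s0 by (simp add: mult_right_mono)
    also have "\<dots> \<le> max C 0 * t" using st by (simp add: mult_left_mono)
    finally show "L f f h \<le> max C 0 * t" .
  qed simp
qed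


context fixes f assumes fD: "f \<in> D"
begin

definition adm where "adm B h \<longleftrightarrow> h \<in> D \<and> (\<forall>x. 0 \<le> h x \<and> h x \<le> indicator B x)"

lemma G_eq: "GammaS D L f B = Sup {L f f h | h. adm B h}"
  unfolding GammaS_def adm_def by simp

lemma G_ne: "{L f f h | h. adm B h} \<noteq> {}"
  using D_zero unfolding adm_def by (auto simp: indicator_def)

lemma G_bdd: "bdd_above {L f f h | h. adm B h}"
proof -
  obtain K where K: "K \<ge> 0" "\<forall>h\<in>D. \<forall>t. (\<forall>x. \<bar>h x\<bar> \<le> t) \<longrightarrow> L f f h \<le> K * t"
    using L_bound[OF fD] by blast
  have "L f f h \<le> K" if "adm B h" for h
  proof -
    have "\<forall>x. \<bar>h x\<bar> \<le> 1" using that unfolding adm_def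
      by (metis abs_of_nonneg indicator_le_1 order_trans)
    then show ?thesis using K that unfolding adm_def by force
  qed
  then show ?thesis unfolding bdd_above_def by blast
qed

lemma G_upper: "adm B h \<Longrightarrow> L f f h \<le> GammaS D L f B"
  unfolding G_eq by (rule cSup_upper[OF _ G_bdd]) auto

lemma G_least: "(\<And>h. adm B h \<Longrightarrow> L f f h \<le> c) \<Longrightarrow> GammaS D L f B \<le> c"
  unfolding G_eq by (rule cSup_least[OF G_ne]) auto

lemma adm_zero: "adm B (\<lambda>x. 0)"
  using D_zero unfolding adm_def by (auto simp: indicator_def)

lemma G_nonneg: "0 \<le> GammaS D L f B"
  using G_upper[OF adm_zero] L_zero[OF fD, of "\<lambda>x. 0"] by simp

lemma adm_mono: assumes "adm B h" "B \<subseteq> B'" shows "adm B' h"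
proof -
  have "\<And>x. indicator B x \<le> (indicator B' x::real)" using assms(2) by (auto simp: indicator_def)
  then show ?thesis using assms(1) unfolding adm_def by (meson order_trans)
qed

lemma G_mono: "B \<subseteq> B' \<Longrightarrow> GammaS D L f B \<le> GammaS D L f B'"
  by (rule G_least) (auto intro: G_upper adm_mono)

lemma G_approx: assumes "0 < e" shows "\<exists>h. adm B h \<and> GammaS D L f B - e < L f f h"
proof -
  have "GammaS D L f B - e < Sup {L f f h | h. adm B h}" using assms G_eq by simp
  then obtain y where "y \<in> {L f f h | h. adm B h}" "GammaS D L f B - e < y"
    using less_cSupD[OF G_ne] by blast
  then show ?thesis by blast
qed

lemma Gm_ne: "{GammaS D L f B | B. B \<in> S_sets D \<and> A \<subseteq> B} \<noteq> {}"
  using S_UNIV by auto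
lemma Gm_bdd: "bdd_below {GammaS D L f B | B. B \<in> S_sets D \<and> A \<subseteq> B}"
  using G_nonneg unfolding bdd_below_def by blast

lemma Gm_upper: "B \<in> S_sets D \<Longrightarrow> A \<subseteq> B \<Longrightarrow> Gamma D L f A \<le> GammaS D L f B"
  unfolding Gamma_def by (rule cInf_lower[OF _ Gm_bdd]) auto

lemma Gm_greatest: "(\<And>B. B \<in> S_sets D \<Longrightarrow> A \<subseteq> B \<Longrightarrow> c \<le> GammaS D L f B) \<Longrightarrow> c \<le> Gamma D L f A"
  unfolding Gamma_def by (rule cInf_greatest[OF Gm_ne]) auto

lemma Gm_nonneg: "0 \<le> Gamma D L f A"
  by (rule Gm_greatest) (rule G_nonneg)

lemma Gm_S: "B \<in> S_sets D \<Longrightarrow> Gamma D L f B = GammaS D L f B"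
  using Gm_upper[of B B] Gm_greatest[of B "GammaS D L f B"] G_mono by (simp add: order_antisym)

lemma Gm_mono: "A \<subseteq> A' \<Longrightarrow> Gamma D L f A \<le> Gamma D L f A'"
  by (rule Gm_greatest) (auto intro: Gm_upper)

lemma Gm_le_UNIV: "Gamma D L f A \<le> Gamma D L f UNIV"
  by (rule Gm_mono) simp

lemma Gm_empty: "Gamma D L f {} = 0"
proof -
  have "GammaS D L f {} \<le> 0"
  proof (rule G_least)
    fix h assume "adm {} h"
    then have "\<forall>x. h x = 0" unfolding adm_def by (auto intro: antisym)
    then show "L f f h \<le> 0" using L_zero[OF fD] by simp
  qed
  then show ?thesis using Gm_S[OF S_empty] G_nonneg[of "{}"] by simp
qed

lemma Gm_approx: assumes "0 < e" shows "\<exists>B\<in>S_sets D. A \<subseteq> B \<and> GammaS D L f B < Gamma D L f A + e"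
proof -
  have "Inf {GammaS D L f B | B. B \<in> S_sets D \<and> A \<subseteq> B} < Gamma D L f A + e"
    using assms unfolding Gamma_def by simp
  then obtain y where "y \<in> {GammaS D L f B | B. B \<in> S_sets D \<and> A \<subseteq> B}" "y < Gamma D L f A + e"
    using cInf_lessD[OF Gm_ne] by blast
  then show ?thesis by blast
qed

lemma G_superadd: assumes "V \<inter> W = {}"
  shows "GammaS D L f V + GammaS D L f W \<le> GammaS D L f (V \<union> W)"
proof -
  have *: "L f f h1 + L f f h2 \<le> GammaS D L f (V \<union> W)" if h1: "adm V h1" and h2: "adm W h2" for h1 h2
  proof -
    have "0 \<le> h1 x + h2 x \<and> h1 x + h2 x \<le> indicator (V \<union> W) x" for x
    proof -
      have a: "0 \<le> h1 x" "h1 x \<le> indicator V x" "0 \<le> h2 x" "h2 x \<le> indicator W x"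
        using h1 h2 unfolding adm_def by auto
      have "x \<in> V \<Longrightarrow> x \<notin> W" using assms by auto
      then show ?thesis using a by (cases "x \<in> V"; cases "x \<in> W") (auto simp: indicator_def)
    qed
    then have "adm (V \<union> W) (\<lambda>x. h1 x + h2 x)"
      using h1 h2 D_add unfolding adm_def by auto
    then have "L f f (\<lambda>x. h1 x + h2 x) \<le> GammaS D L f (V \<union> W)" by (rule G_upper)
    then show ?thesis using L_add[OF fD] h1 h2 unfolding adm_def by simp
  qed
  have "GammaS D L f V \<le> GammaS D L f (V \<union> W) - L f f h2" if h2: "adm W h2" for h2
  proof (rule G_least)
    fix h assume "adm V h" then show "L f f h \<le> GammaS D L f (V \<union> W) - L f f h2"
      using *[OF _ h2] by fastforce
  qed
  then have "GammaS D L f W \<le> GammaS D L f (V \<union> W) - GammaS D L f V"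
    by (intro G_least) (auto simp: algebra_simps)
  then show ?thesis by simp
qed


lemma cara_ge: assumes B: "B \<in> S_sets D"
  shows "Gamma D L f (E \<inter> B) + Gamma D L f (E - B) \<le> Gamma D L f E"
proof (rule Gm_greatest)
  fix U assume U: "U \<in> S_sets D" "E \<subseteq> U"
  show "Gamma D L f (E \<inter> B) + Gamma D L f (E - B) \<le> GammaS D L f U"
  proof (rule field_le_epsilon)
    fix e :: real assume e: "0 < e"
    obtain K where K: "K \<ge> 0" "\<forall>h\<in>D. \<forall>t. (\<forall>x. \<bar>h x\<bar> \<le> t) \<longrightarrow> L f f h \<le> K * t"
      using L_bound[OF fD] by blast
    obtain h where h: "adm (U \<inter> B) h" "GammaS D L f (U \<inter> B) - e/2 < L f f h"
      using G_approx[of "e/2" "U \<inter> B"] e by auto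
    have hD: "h \<in> D" and h0: "\<And>x. 0 \<le> h x" and hI: "\<And>x. h x \<le> indicator (U \<inter> B) x"
      using h(1) unfolding adm_def by auto
    define t where "t = e / (2 * (K + 1))"
    have t0: "0 < t" unfolding t_def using e K by simp
    have Kt: "K * t \<le> e / 2"
    proof -
      have "K * t = (e/2) * (K / (K + 1))" unfolding t_def using K by (simp add: field_simps)
      also have "\<dots> \<le> (e/2) * 1" using K e by (intro mult_left_mono) auto
      finally show ?thesis by simp
    qed
    obtain g where g: "g \<in> D" "\<And>x. 0 \<le> g x" "U = {x. 0 < g x}" using S_cases[OF U(1)] by blast
    obtain M where M: "\<And>x. \<bar>g x\<bar> \<le> M" using D_bdd[OF g(1)] by blast
    have M0: "0 \<le> M" using M[of undefined] by linarith
    define k where "k = M / t + 1"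
    have k0: "0 < k" unfolding k_def using M0 t0 by (simp add: add_nonneg_pos)
    have kt: "k * t = M + t" unfolding k_def using t0 by (simp add: field_simps)
    define mt where "mt = (\<lambda>x. min (h x) t)"
    define r where "r = (\<lambda>x. h x - mt x)"
    have mtD: "mt \<in> D" unfolding mt_def using D_mincst[OF hD t0] .
    have rD: "r \<in> D" unfolding r_def using D_diff[OF hD mtD] .
    define W where "W = {x. 0 < r x}"
    define V where "V = {x. 0 < g x - k * h x}"
    have VD: "(\<lambda>x. g x - k * h x) \<in> D" using D_diff[OF g(1) D_scale[OF hD]] .
    have WS: "W \<in> S_sets D" unfolding W_def by (rule S_D[OF rD])
    have VS: "V \<in> S_sets D" unfolding V_def by (rule S_D[OF VD])
    have hle1: "h x \<le> 1" for x
      using hI[of x] indicator_le_1[of "U \<inter> B" x] by (meson order_trans)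
    have "0 \<le> r x \<and> r x \<le> indicator W x" for x
      using h0[of x] hle1[of x] t0 unfolding W_def by (auto simp: r_def mt_def indicator_def)
    then have admW: "adm W r" unfolding adm_def using rD by auto
    have mt_bd: "\<forall>x. \<bar>mt x\<bar> \<le> t" unfolding mt_def using h0 t0 by auto
    have Lr: "L f f r = L f f h - L f f mt" unfolding r_def using L_diff[OF fD hD mtD] .
    have Lmt: "L f f mt \<le> K * t" using K(2) mtD mt_bd by blast
    have VW: "V \<inter> W = {}"
    proof (rule ccontr)
      assume "V \<inter> W \<noteq> {}"
      then obtain x where x: "x \<in> V" "x \<in> W" by blast
      have "h x > t" using x(2) unfolding W_def r_def mt_def by (auto simp: min_def split: if_splits)
      then have "k * h x > k * t" using k0 by simp
      moreover have "g x \<le> M" using M[of x] by linarith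
      ultimately show False using x(1) kt t0 unfolding V_def by simp
    qed
    have VWU: "V \<union> W \<subseteq> U"
    proof
      fix x assume "x \<in> V \<union> W"
      then show "x \<in> U"
      proof
        assume "x \<in> V"
        then have "g x > k * h x" unfolding V_def by simp
        moreover have "k * h x \<ge> 0" using k0 h0[of x] by simp
        ultimately show ?thesis using g(3) by simp
      next
        assume "x \<in> W"
        then have "h x > 0" using t0 unfolding W_def r_def mt_def by (auto simp: min_def split: if_splits)
        then show ?thesis using hI[of x] by (metis IntD1 indicator_simps(2) not_less)
      qed
    qed
    have EV: "E - B \<subseteq> V"
    proof
      fix x assume x: "x \<in> E - B"
      then have "h x = 0" using hI[of x] h0[of x] by (auto simp: indicator_def)
      moreover have "g x > 0" using x U(2) g(3) by auto
      ultimately show "x \<in> V" unfolding V_def by simp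
    qed
    have UBS: "U \<inter> B \<in> S_sets D" using S_Int[OF U(1) B] .
    have "Gamma D L f (E \<inter> B) \<le> GammaS D L f (U \<inter> B)" using Gm_upper[OF UBS, of "E \<inter> B"] U(2) by auto
    also have "\<dots> < L f f h + e/2" using h(2) by simp
    also have "\<dots> \<le> GammaS D L f W + e"
      using G_upper[OF admW] Lr Lmt Kt by simp
    finally have 1: "Gamma D L f (E \<inter> B) \<le> GammaS D L f W + e" by simp
    have 2: "Gamma D L f (E - B) \<le> GammaS D L f V" using Gm_upper[OF VS EV] .
    have 3: "GammaS D L f V + GammaS D L f W \<le> GammaS D L f U"
      using G_superadd[OF VW] G_mono[OF VWU] by simp
    show "Gamma D L f (E \<inter> B) + Gamma D L f (E - B) \<le> GammaS D L f U + e"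
      using 1 2 3 by simp
  qed
qed


lemma S_Un: "A \<in> S_sets D \<Longrightarrow> B \<in> S_sets D \<Longrightarrow> A \<union> B \<in> S_sets D"
proof -
  assume "A \<in> S_sets D" "B \<in> S_sets D"
  then obtain g g' where g: "g \<in> D" "A = {x. 0 < g x}" and g': "g' \<in> D" "B = {x. 0 < g' x}"
    unfolding S_sets_def by blast
  have "A \<union> B = {x. 0 < max (g x) (g' x)}" using g g' by auto
  then show ?thesis using S_D[OF D_max[OF g(1) g'(1)]] by simp
qed

lemma G_subadd: assumes ed: "energy_dominant D L m" and U: "U \<in> S_sets D" and U': "U' \<in> S_sets D"
  shows "GammaS D L f (U \<union> U') \<le> GammaS D L f U + GammaS D L f U'"
proof (rule G_least)
  fix h assume h: "adm (U \<union> U') h"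
  have hD: "h \<in> D" and h0: "\<And>x. 0 \<le> h x" and hI: "\<And>x. h x \<le> indicator (U \<union> U') x"
    using h unfolding adm_def by auto
  have hle1: "h x \<le> 1" for x
    using hI[of x] indicator_le_1[of "U \<union> U'" x] by (meson order_trans)
  obtain g where g: "g \<in> D" "\<And>x. 0 \<le> g x" "U = {x. 0 < g x}" using S_cases[OF U] by blast
  obtain g' where g': "g' \<in> D" "\<And>x. 0 \<le> g' x" "U' = {x. 0 < g' x}" using S_cases[OF U'] by blast
  define s where "s = (\<lambda>x. g x + g' x)"
  have sD: "s \<in> D" unfolding s_def using D_add[OF g(1) g'(1)] .
  have s0: "0 \<le> s x" for x unfolding s_def using g(2)[of x] g'(2)[of x] by simp
  define a where "a n = (\<lambda>x. min (h x) (real n * s x))" for n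
  define r where "r n = (\<lambda>x. h x - a n x)" for n
  define R where "R n = {x. 0 < r n x}" for n
  have aD: "a n \<in> D" for n unfolding a_def using D_min[OF hD D_scale[OF sD]] .
  have rD: "r n \<in> D" for n unfolding r_def using D_diff[OF hD aD] .
  have RS: "R n \<in> S_sets D" for n unfolding R_def by (rule S_D[OF rD])
  have Lh: "L f f h = L f f (a n) + L f f (r n)" for n
    unfolding r_def using L_diff[OF fD hD aD] by simp
  have La: "L f f (a n) \<le> GammaS D L f U + GammaS D L f U'" for n
  proof -
    define b where "b = (\<lambda>x. min (h x) (real n * g x))"
    define b' where "b' = (\<lambda>x. min (h x) (real n * g' x))"
    have bD: "b \<in> D" unfolding b_def using D_min[OF hD D_scale[OF g(1)]] .
    have bD': "b' \<in> D" unfolding b'_def using D_min[OF hD D_scale[OF g'(1)]] .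
    have "0 \<le> b x \<and> b x \<le> indicator U x" for x
      using h0[of x] hle1[of x] g(2)[of x] g(3) unfolding b_def
      by (cases "x \<in> U") (auto simp: indicator_def)
    then have admb: "adm U b" unfolding adm_def using bD by auto
    have "0 \<le> b' x \<and> b' x \<le> indicator U' x" for x
      using h0[of x] hle1[of x] g'(2)[of x] g'(3) unfolding b'_def
      by (cases "x \<in> U'") (auto simp: indicator_def)
    then have admb': "adm U' b'" unfolding adm_def using bD' by auto
    have le: "a n x \<le> b x + b' x" for x
    proof -
      have "real n * s x = real n * g x + real n * g' x" unfolding s_def by (simp add: algebra_simps)
      moreover have "0 \<le> real n * g x" "0 \<le> real n * g' x" using g(2)[of x] g'(2)[of x] by auto
      ultimately show ?thesis unfolding a_def b_def b'_def using h0[of x] by (auto simp: min_def)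
    qed
    have "L f f (a n) \<le> L f f (\<lambda>x. b x + b' x)"
      by (rule L_mono[OF fD aD D_add[OF bD bD']]) (use le in auto)
    also have "\<dots> = L f f b + L f f b'" using L_add[OF fD bD bD'] .
    also have "\<dots> \<le> GammaS D L f U + GammaS D L f U'"
      using G_upper[OF admb] G_upper[OF admb'] by simp
    finally show ?thesis .
  qed
  have Lr: "L f f (r n) \<le> Gamma D L f (R n)" for n
  proof -
    have "0 \<le> r n x \<and> r n x \<le> indicator (R n) x" for x
      using h0[of x] hle1[of x] mult_nonneg_nonneg[OF of_nat_0_le_iff[of n] s0[of x]]
      unfolding r_def a_def R_def by (auto simp: indicator_def min_def)
    then have "adm (R n) (r n)" unfolding adm_def using rD by auto
    then show ?thesis using G_upper Gm_S[OF RS] by simp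
  qed
  show "L f f h \<le> GammaS D L f U + GammaS D L f U'"
  proof (rule field_le_epsilon)
    fix e :: real assume e: "0 < e"
    have ac: "abs_cont (gen_alg D) (Gamma D L f) m" and fm: "finite_measure_on (gen_alg D) m"
      using ed fD unfolding energy_dominant_def by auto
    obtain \<delta> where \<delta>: "\<delta> > 0" "\<forall>A\<in>gen_alg D. m A < \<delta> \<longrightarrow> Gamma D L f A < e"
      using ac e unfolding abs_cont_def by blast
    have dec: "R (Suc n) \<subseteq> R n" for n
    proof
      fix x assume "x \<in> R (Suc n)"
      then have "h x > real (Suc n) * s x" unfolding R_def r_def a_def by (auto simp: min_def split: if_splits)
      moreover have "real (Suc n) * s x \<ge> real n * s x" using s0[of x] by (simp add: mult_right_mono)
      ultimately show "x \<in> R n" unfolding R_def r_def a_def by (auto simp: min_def)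
    qed
    have emp: "(\<Inter>n. R n) = {}"
    proof (rule ccontr)
      assume "(\<Inter>n. R n) \<noteq> {}"
      then obtain x where x: "\<And>n. x \<in> R n" by blast
      have hx: "h x > real n * s x" for n using x[of n] unfolding R_def r_def a_def
        by (auto simp: min_def split: if_splits)
      show False
      proof (cases "s x > 0")
        case True
        then obtain n where "h x < real n * s x" using ex_less_of_nat_mult by blast
        then show False using hx[of n] by simp
      next
        case False
        then have "g x = 0" "g' x = 0" using s0[of x] g(2)[of x] g'(2)[of x] unfolding s_def by auto
        then have "x \<notin> U \<union> U'" using g(3) g'(3) by auto
        then have "h x \<le> 0" using hI[of x] by simp
        then show False using hx[of 0] by simp
      qed
    qed
    have "(\<lambda>n. m (R n)) \<longlonglongrightarrow> 0"
      by (rule meas_cont[OF gen_alg_algebra fm _ dec emp]) (use RS S_gen in auto)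
    then have "eventually (\<lambda>n. m (R n) < \<delta>) sequentially"
      using \<delta>(1) by (rule order_tendstoD(2))
    then obtain n where "m (R n) < \<delta>" by (auto simp: eventually_sequentially)
    then have "Gamma D L f (R n) < e" using \<delta>(2) RS[of n] S_gen by auto
    then show "L f f h \<le> GammaS D L f U + GammaS D L f U' + e"
      using Lh[of n] La[of n] Lr[of n] by simp
  qed
qed


lemma cara_le: assumes ed: "energy_dominant D L m"
  shows "Gamma D L f E \<le> Gamma D L f (E \<inter> B) + Gamma D L f (E - B)"
proof (rule field_le_epsilon)
  fix e :: real assume e: "0 < e"
  obtain U1 where U1: "U1 \<in> S_sets D" "E \<inter> B \<subseteq> U1" "GammaS D L f U1 < Gamma D L f (E \<inter> B) + e/2"
    using Gm_approx[of "e/2" "E \<inter> B"] e by auto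
  obtain U2 where U2: "U2 \<in> S_sets D" "E - B \<subseteq> U2" "GammaS D L f U2 < Gamma D L f (E - B) + e/2"
    using Gm_approx[of "e/2" "E - B"] e by auto
  have "Gamma D L f E \<le> GammaS D L f (U1 \<union> U2)"
    by (rule Gm_upper[OF S_Un[OF U1(1) U2(1)]]) (use U1 U2 in auto)
  also have "\<dots> \<le> GammaS D L f U1 + GammaS D L f U2" by (rule G_subadd[OF ed U1(1) U2(1)])
  finally show "Gamma D L f E \<le> Gamma D L f (E \<inter> B) + Gamma D L f (E - B) + e"
    using U1(3) U2(3) by simp
qed

lemma cara: assumes ed: "energy_dominant D L m" and B: "B \<in> gen_alg D"
  shows "Gamma D L f E = Gamma D L f (E \<inter> B) + Gamma D L f (E - B)"
proof -
  define C where "C = {B. \<forall>E. Gamma D L f E = Gamma D L f (E \<inter> B) + Gamma D L f (E - B)}"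
  have "algebra UNIV C"
    unfolding algebra_iff_Int
  proof (intro conjI ballI)
    show "C \<subseteq> Pow UNIV" by simp
    show "{} \<in> C" unfolding C_def using Gm_empty by simp
  next
    fix a assume "a \<in> C"
    then have a: "Gamma D L f E = Gamma D L f (E \<inter> a) + Gamma D L f (E - a)" for E
      unfolding C_def by blast
    have "Gamma D L f E = Gamma D L f (E \<inter> (UNIV - a)) + Gamma D L f (E - (UNIV - a))" for E
    proof -
      have s: "E \<inter> (UNIV - a) = E - a" "E - (UNIV - a) = E \<inter> a" by auto
      show ?thesis unfolding s using a[of E] by linarith
    qed
    then show "UNIV - a \<in> C" unfolding C_def by blast
  next
    fix a b assume "a \<in> C" "b \<in> C"
    then have a: "Gamma D L f E = Gamma D L f (E \<inter> a) + Gamma D L f (E - a)"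
      and b: "Gamma D L f E = Gamma D L f (E \<inter> b) + Gamma D L f (E - b)" for E
      unfolding C_def by blast+
    have "Gamma D L f E = Gamma D L f (E \<inter> (a \<inter> b)) + Gamma D L f (E - a \<inter> b)" for E
    proof -
      have e1: "E \<inter> a \<inter> b = E \<inter> (a \<inter> b)" "(E - a \<inter> b) \<inter> a = E \<inter> a - b"
        "(E - a \<inter> b) - a = E - a" by auto
      have 1: "Gamma D L f E = Gamma D L f (E \<inter> a) + Gamma D L f (E - a)" by (rule a)
      have 2: "Gamma D L f (E \<inter> a) = Gamma D L f (E \<inter> a \<inter> b) + Gamma D L f (E \<inter> a - b)" by (rule b)
      have 3: "Gamma D L f (E - a \<inter> b) = Gamma D L f ((E - a \<inter> b) \<inter> a) + Gamma D L f ((E - a \<inter> b) - a)"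
        by (rule a)
      show ?thesis using 1 2 3 unfolding e1 by linarith
    qed
    then show "a \<inter> b \<in> C" unfolding C_def by blast
  qed
  moreover have "S_sets D \<subseteq> C"
    unfolding C_def using cara_ge cara_le[OF ed] by (auto intro: antisym)
  ultimately have "gen_alg D \<subseteq> C" by (rule gen_alg_min)
  then show ?thesis using B unfolding C_def by blast
qed

lemma part1: assumes ed: "energy_dominant D L m"
  shows "countably_additive_real (gen_alg D) (Gamma D L f)"
  unfolding countably_additive_real_def
proof (intro allI impI)
  fix A :: "nat \<Rightarrow> 'a set"
  assume AM: "range A \<subseteq> gen_alg D" and disj: "disjoint_family A" and UM: "\<Union>(range A) \<in> gen_alg D"
  interpret algebra UNIV "gen_alg D" by (rule gen_alg_algebra)
  define U where "U = \<Union>(range A)"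
  define R where "R N = U - (\<Union>i<N. A i)" for N
  have RM: "R N \<in> gen_alg D" for N
  proof -
    have "(\<Union>i\<in>{..<N}. A i) \<in> gen_alg D" by (rule finite_UN) (use AM in auto)
    then show ?thesis unfolding R_def U_def using UM by (intro Diff) auto
  qed
  have step: "Gamma D L f U = (\<Sum>i<N. Gamma D L f (A i)) + Gamma D L f (R N)" for N
  proof (induction N)
    case 0 then show ?case unfolding R_def by simp
  next
    case (Suc N)
    have e1: "R N \<inter> A N = A N"
    proof -
      have "A N \<inter> A i = {}" if "i < N" for i using disj that unfolding disjoint_family_on_def by auto
      then show ?thesis unfolding R_def U_def by auto
    qed
    have e2: "R N - A N = R (Suc N)" unfolding R_def by (auto simp: lessThan_Suc)
    have AN: "A N \<in> gen_alg D" using AM by auto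
    have "Gamma D L f (R N) = Gamma D L f (A N) + Gamma D L f (R (Suc N))"
      using cara[OF ed AN, of "R N"] unfolding e1 e2 .
    then show ?case using Suc by simp
  qed
  have fm: "finite_measure_on (gen_alg D) m" and ac: "abs_cont (gen_alg D) (Gamma D L f) m"
    using ed fD unfolding energy_dominant_def by auto
  have dec: "R (Suc N) \<subseteq> R N" for N unfolding R_def by (auto simp: lessThan_Suc)
  have emp: "(\<Inter>N. R N) = {}"
  proof (rule ccontr)
    assume "(\<Inter>N. R N) \<noteq> {}"
    then obtain x where x: "\<And>N. x \<in> R N" by blast
    then obtain i where "x \<in> A i" using x[of 0] unfolding R_def U_def by auto
    then show False using x[of "Suc i"] unfolding R_def by auto
  qed
  have mR: "(\<lambda>N. m (R N)) \<longlonglongrightarrow> 0"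
    by (rule meas_cont[OF gen_alg_algebra fm _ dec emp]) (use RM in auto)
  have GR: "(\<lambda>N. Gamma D L f (R N)) \<longlonglongrightarrow> 0"
  proof (rule order_tendstoI)
    fix a :: real assume "a < 0"
    then have "\<forall>N. a < Gamma D L f (R N)" using Gm_nonneg by (meson less_le_trans)
    then show "eventually (\<lambda>N. a < Gamma D L f (R N)) sequentially"
      by (simp add: always_eventually)
  next
    fix a :: real assume a: "0 < a"
    obtain \<delta> where \<delta>: "\<delta> > 0" "\<forall>B\<in>gen_alg D. m B < \<delta> \<longrightarrow> Gamma D L f B < a"
      using ac a unfolding abs_cont_def by blast
    have "eventually (\<lambda>N. m (R N) < \<delta>) sequentially" using mR \<delta>(1) by (rule order_tendstoD(2))
    then show "eventually (\<lambda>N. Gamma D L f (R N) < a) sequentially"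
      by eventually_elim (use \<delta>(2) RM in auto)
  qed
  have "(\<lambda>N. Gamma D L f U - Gamma D L f (R N)) \<longlonglongrightarrow> Gamma D L f U - 0"
    by (intro tendsto_diff tendsto_const GR)
  moreover have "(\<lambda>N. Gamma D L f U - Gamma D L f (R N)) = (\<lambda>N. \<Sum>i<N. Gamma D L f (A i))"
    using step by (auto simp: algebra_simps)
  ultimately show "(\<lambda>n. Gamma D L f (A n)) sums Gamma D L f (\<Union>(range A))"
    unfolding sums_def U_def by simp
qed


end

lemma part2:
  assumes sep: "energy_separable_wrt D L fs"
    and ca: "\<forall>n. countably_additive_real (gen_alg D) (Gamma D L (fs n))"
  shows "energy_dominant D L (nu_of D L fs)"
proof -
  have fsD: "fs n \<in> D" for n using sep unfolding energy_separable_wrt_def by auto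
  define c where "c n A = Gamma D L (fs n) A / (1 + Gamma D L (fs n) UNIV)" for n A
  have c0: "0 \<le> c n A" for n A unfolding c_def using Gm_nonneg[OF fsD] by simp
  have c1: "c n A \<le> 1" for n A
  proof -
    have "Gamma D L (fs n) A \<le> 1 + Gamma D L (fs n) UNIV"
      using Gm_le_UNIV[OF fsD, of n A] by simp
    then show ?thesis unfolding c_def using Gm_nonneg[OF fsD, of n UNIV] by simp
  qed
  define w where "w n = (1/2::real) ^ Suc n" for n
  have w0: "0 \<le> w n" for n unfolding w_def by simp
  have sw: "summable w" unfolding w_def
    using summable_mult[OF summable_geometric[of "1/2::real"], of "1/2"] by simp
  have nu: "nu_of D L fs A = (\<Sum>n. w n * c n A)" for A unfolding nu_of_def w_def c_def by simp
  have sterm: "summable (\<lambda>n. w n * c n A)" for A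
    by (rule summable_comparison_test'[OF sw, of 0]) (use w0 c0 c1 in \<open>auto intro: mult_left_le\<close>)
  have nonneg: "\<forall>A\<in>gen_alg D. 0 \<le> nu_of D L fs A"
    unfolding nu using sterm w0 c0 by (auto intro: suminf_nonneg)
  have cadd: "countably_additive_real (gen_alg D) (nu_of D L fs)"
    unfolding countably_additive_real_def
  proof (intro allI impI)
    fix A :: "nat \<Rightarrow> 'a set"
    assume AM: "range A \<subseteq> gen_alg D" and disj: "disjoint_family A" and UM: "\<Union>(range A) \<in> gen_alg D"
    define U where "U = \<Union>(range A)"
    have sc: "(\<lambda>k. c n (A k)) sums c n U" for n
      unfolding c_def U_def using ca AM disj UM unfolding countably_additive_real_def
      by (intro sums_divide) blast
    define a where "a n K = w n * (\<Sum>k<K. c n (A k))" for n K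
    have lim: "(\<lambda>K. a n K) \<longlonglongrightarrow> w n * c n U" for n
      unfolding a_def using sc[of n] unfolding sums_def by (intro tendsto_mult_left)
    have bnd: "norm (a n K) \<le> w n" for n K
    proof -
      have "(\<Sum>k<K. c n (A k)) \<le> c n U"
        using sum_le_suminf[OF sums_summable[OF sc[of n]], of "{..<K}"] c0 sums_unique[OF sc[of n]] by simp
      moreover have "0 \<le> (\<Sum>k<K. c n (A k))" using c0 by (simp add: sum_nonneg)
      ultimately show ?thesis unfolding a_def using c1[of n U] w0[of n]
        by (simp add: abs_mult mult_left_le)
    qed
    have "((\<lambda>K. \<Sum>n. a n K) \<longlonglongrightarrow> (\<Sum>n. w n * c n U))"
      using tannerys_theorem[of a "\<lambda>n. w n * c n U" sequentially w] lim bnd sw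
      by (auto intro: always_eventually)
    moreover have "(\<Sum>n. a n K) = (\<Sum>k<K. nu_of D L fs (A k))" for K
    proof -
      have "(\<Sum>n. a n K) = (\<Sum>n. \<Sum>k<K. w n * c n (A k))" unfolding a_def by (simp add: sum_distrib_left)
      also have "\<dots> = (\<Sum>k<K. \<Sum>n. w n * c n (A k))" by (rule suminf_sum) (rule sterm)
      finally show ?thesis unfolding nu .
    qed
    ultimately show "(\<lambda>n. nu_of D L fs (A n)) sums nu_of D L fs (\<Union>(range A))"
      unfolding sums_def nu U_def by simp
  qed
  show ?thesis unfolding energy_dominant_def finite_measure_on_def
    using nonneg cadd sep unfolding energy_separable_wrt_def by blast
qed

end

theorem theoremT:
  fixes D :: "('a \<Rightarrow> real) set"
    and L :: "('a \<Rightarrow> real) \<Rightarrow> ('a \<Rightarrow> real) \<Rightarrow> ('a \<Rightarrow> real) \<Rightarrow> real"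
    and chi :: "'a \<Rightarrow> real"
  assumes "stone_algebra D"
    and "chi \<in> D" and "\<forall>x. 0 < chi x"
    and "lagrangian D L"
  shows "((\<exists>m. energy_dominant D L m) \<longrightarrow>
            (\<forall>f\<in>D. countably_additive_real (gen_alg D) (Gamma D L f)))
       \<and> (\<forall>fs. energy_separable_wrt D L fs \<and>
               (\<forall>n. countably_additive_real (gen_alg D) (Gamma D L (fs n))) \<longrightarrow>
               energy_dominant D L (nu_of D L fs))"
proof -
  interpret lag D L chi using assms by unfold_locales
  show ?thesis using part1 part2 by blast
qed

end
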